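(* A quantum graph $\mathcal{S} \subseteq M_n$ is connected if and only if $\sum_{i\neq j} \dim\big[P_j \mathcal{S} P_i\big] \ge 2(m-1)$ whenever $m\in\mathbb{N}$ and $P_1,\dots,P_m\in M_n$ are nontrivial, mutually disjoint projections with $P_1+\dots+P_m=I_n$.
   Context: $M_n$ denotes the $n\times n$ complex matrices, $I_n$ the identity. A projection is $P$ with $P=P^2=P^\dagger$; it is nontrivial if $P\neq 0$ and $P\neq I_n$; projections $P,Q$ are disjoint if $PQ=0$. A quantum graph on $M_n$ is a linear subspace $\mathcal{S}\subseteq M_n$ closed under adjoints and containing $I_n$. $P\mathcal{S}Q=\{PAQ: A\in\mathcal{S}\}$, a linear subspace. For subspaces, $\mathcal{U}\mathcal{V}=\operatorname{span}\{UV: U\in\mathcal{U},V\in\mathcal{V}\}$, $\mathcal{U}^0=\mathbb{C}I_n$, $\mathcal{U}^{k+1}=\mathcal{U}^k\mathcal{U}$. $\mathcal{S}$ is connected if $\mathcal{S}^m=M_n$ for some $m\in\mathbb{N}$. *)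

theory Defs
  imports "HOL-Analysis.Analysis"
begin

text \<open>Matrices in M_n are modelled as complex^'n^'n for a finite index type 'n
(so n = CARD('n) >= 1 is arbitrary). M_n is a complex vector space under
entrywise scalar multiplication mscale.\<close>

type_synonym 'n cmat = "complex ^ 'n ^ 'n"

definition mscale :: "complex \<Rightarrow> 'n::finite cmat \<Rightarrow> 'n cmat" where
  "mscale c A = (\<chi> i j. c * A $ i $ j)"

lemma vector_space_mscale: "vector_space (mscale :: complex \<Rightarrow> 'n::finite cmat \<Rightarrow> 'n cmat)"
  by unfold_locales (auto simp: mscale_def vec_eq_iff algebra_simps)

text \<open>Conjugate transpose.\<close>
definition adj :: "'n::finite cmat \<Rightarrow> 'n cmat" where
  "adj A = (\<chi> i j. cnj (A $ j $ i))"

definition cspan :: "'n::finite cmat set \<Rightarrow> 'n cmat set" where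
  "cspan = module.span mscale"

definition csubspace :: "'n::finite cmat set \<Rightarrow> bool" where
  "csubspace = module.subspace mscale"

text \<open>Complex dimension of a subspace.\<close>
definition cdim :: "'n::finite cmat set \<Rightarrow> nat" where
  "cdim = vector_space.dim mscale"

definition is_projection :: "'n::finite cmat \<Rightarrow> bool" where
  "is_projection P \<longleftrightarrow> P ** P = P \<and> adj P = P"

definition nontrivial_projection :: "'n::finite cmat \<Rightarrow> bool" where
  "nontrivial_projection P \<longleftrightarrow> is_projection P \<and> P \<noteq> 0 \<and> P \<noteq> mat 1"

definition quantum_graph :: "'n::finite cmat set \<Rightarrow> bool" where
  "quantum_graph S \<longleftrightarrow> csubspace S \<and> (\<forall>A\<in>S. adj A \<in> S) \<and> mat 1 \<in> S"

text \<open>P S Q = {P A Q : A in S}.\<close>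
definition sandwich :: "'n::finite cmat \<Rightarrow> 'n cmat set \<Rightarrow> 'n cmat \<Rightarrow> 'n cmat set" where
  "sandwich P S Q = {P ** A ** Q | A. A \<in> S}"

text \<open>Product of subspaces: UV = span{UV}.\<close>
definition subprod :: "'n::finite cmat set \<Rightarrow> 'n cmat set \<Rightarrow> 'n cmat set" where
  "subprod U V = cspan {X ** Y | X Y. X \<in> U \<and> Y \<in> V}"

text \<open>U^0 = C I_n, U^(k+1) = U^k U.\<close>
primrec subpow :: "'n::finite cmat set \<Rightarrow> nat \<Rightarrow> 'n cmat set" where
  "subpow U 0 = cspan {mat 1}"
| "subpow U (Suc k) = subprod (subpow U k) U"

definition qconnected :: "'n::finite cmat set \<Rightarrow> bool" where
  "qconnected S \<longleftrightarrow> (\<exists>m. subpow S m = UNIV)"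

end

theory Submission
  imports Defs
begin


interpretation M: vector_space "mscale :: complex \<Rightarrow> 'n::finite cmat \<Rightarrow> 'n cmat"
  by (rule vector_space_mscale)

definition U :: "'n::finite \<Rightarrow> 'n \<Rightarrow> 'n cmat" where
  "U a b = (\<chi> i j. if i = a \<and> j = b then 1 else 0)"

lemma mat_decomp: "(M::'n::finite cmat) = (\<Sum>a\<in>UNIV. \<Sum>b\<in>UNIV. mscale (M$a$b) (U a b))"
proof -
  have e: "(if P \<and> Q then c else 0) = (if P then (if Q then c else 0) else (0::complex))" for P Q c by simp
  have e2: "c * (if P then a else 0) = (if P then c * a else (0::complex))" for P a c by simp
  have e3: "(\<Sum>y\<in>UNIV. if P then g y else 0) = (if P then (\<Sum>y\<in>UNIV. g y) else (0::complex))" for P and g :: "'n \<Rightarrow> complex"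
    by (cases P) auto
  show ?thesis by (simp add: vec_eq_iff mscale_def U_def e e2 e3 sum.delta sum.delta' cong: if_cong)
qed

lemma U_span: "M.span (range (\<lambda>(a,b). U a b :: 'n::finite cmat)) = UNIV"
proof -
  have "x \<in> M.span (range (\<lambda>(a,b). U a b))" for x :: "'n::finite cmat"
  proof -
    have "(\<Sum>a\<in>UNIV. \<Sum>b\<in>UNIV. mscale (x$a$b) (U a b)) \<in> M.span (range (\<lambda>(a,b). U a b))"
      by (intro M.span_sum M.span_scale M.span_base) auto
    then show ?thesis using mat_decomp[of x] by simp
  qed
  then show ?thesis by auto
qed

lemma U_indep: "M.independent (range (\<lambda>(a,b). U a b :: 'n::finite cmat))"
proof (rule M.independent_if_scalars_zero)
  show "finite (range (\<lambda>(a,b). U a b :: 'n::finite cmat))" by simp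
  fix f :: "'n::finite cmat \<Rightarrow> complex" and x :: "'n cmat"
  assume eq: "(\<Sum>x\<in>range (\<lambda>(a,b). U a b). mscale (f x) x) = 0" and x: "x \<in> range (\<lambda>(a,b). U a b)"
  obtain a b where xab: "x = U a b" using x by auto
  have "(\<Sum>y\<in>range (\<lambda>(a,b). U a b). mscale (f y) y) $ a $ b = f x"
  proof -
    have "(\<Sum>y\<in>range (\<lambda>(a,b). U a b). mscale (f y) y) $ a $ b
        = (\<Sum>y\<in>range (\<lambda>(a,b). U a b). f y * y $ a $ b)"
      by (simp add: mscale_def)
    also have "\<dots> = (\<Sum>y\<in>{x}. f y * y $ a $ b)"
    proof (rule sum.mono_neutral_right)
      show "\<forall>i\<in>range (\<lambda>(a, b). U a b) - {x}. f i * i $ a $ b = 0"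
        using xab by (auto simp: U_def split: if_splits)
    qed (use x in auto)
    also have "\<dots> = f x" using xab by (simp add: U_def)
    finally show ?thesis .
  qed
  then show "f x = 0" using eq by simp
qed

interpretation MF: finite_dimensional_vector_space "mscale :: complex \<Rightarrow> 'n::finite cmat \<Rightarrow> 'n cmat"
   "range (\<lambda>(a,b). U a b)"
  by unfold_locales (auto simp: U_span U_indep)

lemma cspan_eq: "cspan = M.span" by (simp add: cspan_def)
lemma csubspace_eq: "csubspace = M.subspace" by (simp add: csubspace_def)
lemma cdim_eq: "cdim = M.dim" by (simp add: cdim_def)

lemma cdim_eq_0: "cdim S = 0 \<longleftrightarrow> S \<subseteq> {0}"
  by (simp add: cdim_eq)



lemma mscale_mult_left: "mscale c A ** B = mscale c (A ** B)"
  by (simp add: mscale_def matrix_matrix_mult_def vec_eq_iff sum_distrib_left mult.assoc)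
lemma mscale_mult_right: "A ** mscale c B = mscale c (A ** B)"
  by (simp add: mscale_def matrix_matrix_mult_def vec_eq_iff sum_distrib_left mult.left_commute)
lemma mscale_mv: "mscale c A *v x = c *s (A *v x)"
  by (simp add: mscale_def matrix_vector_mult_def vec_eq_iff sum_distrib_left mult.assoc)
lemma mv_scale: "A *v (c *s x) = c *s (A *v x :: complex^'n::finite)"
  by (simp add: matrix_vector_mult_def vec_eq_iff sum_distrib_left mult.left_commute)
lemma mscale_add: "mscale c (A + B) = mscale c A + mscale c B"
  by (simp add: mscale_def vec_eq_iff algebra_simps)
lemma mscale_add2: "mscale (c + d) A = mscale c A + mscale d A"
  by (simp add: mscale_def vec_eq_iff algebra_simps)
lemma mscale_mscale: "mscale c (mscale d A) = mscale (c * d) A"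
  by (simp add: mscale_def vec_eq_iff algebra_simps)
lemma mscale_1[simp]: "mscale 1 A = A"
  by (simp add: mscale_def vec_eq_iff)
lemma mscale_0[simp]: "mscale 0 A = 0" "mscale c 0 = 0"
  by (simp_all add: mscale_def vec_eq_iff)
lemma mscale_minus: "mscale (-1) A = - A"
  by (simp add: mscale_def vec_eq_iff)
lemma mscale_diff: "mscale c (A - B) = mscale c A - mscale c B"
  by (simp add: mscale_def vec_eq_iff algebra_simps)

lemma matrix_add_rdistrib': "(B + C) ** A = B ** A + C ** (A::'n::finite cmat)"
  by (simp add: matrix_matrix_mult_def vec_eq_iff sum.distrib distrib_right)
lemma matrix_diff_rdistrib: "(B - C) ** A = B ** A - C ** (A::'n::finite cmat)"
  by (simp add: matrix_matrix_mult_def vec_eq_iff sum_subtractf left_diff_distrib)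
lemma matrix_diff_ldistrib: "A ** (B - C) = A ** B - A ** (C::'n::finite cmat)"
  by (simp add: matrix_matrix_mult_def vec_eq_iff sum_subtractf right_diff_distrib)

lemma sum_mult_right: "finite J \<Longrightarrow> (\<Sum>j\<in>J. f j) ** (A::'n::finite cmat) = (\<Sum>j\<in>J. f j ** A)"
  by (induction J rule: finite_induct) (auto simp: matrix_add_rdistrib')
lemma sum_mult_left: "finite J \<Longrightarrow> (A::'n::finite cmat) ** (\<Sum>j\<in>J. f j) = (\<Sum>j\<in>J. A ** f j)"
  by (induction J rule: finite_induct) (auto simp: matrix_add_ldistrib)

lemma adj_mult: "adj (A ** B) = adj B ** adj A"
  by (simp add: adj_def matrix_matrix_mult_def vec_eq_iff mult.commute)
lemma adj_adj[simp]: "adj (adj A) = A"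
  by (simp add: adj_def vec_eq_iff)
lemma adj_add: "adj (A + B) = adj A + adj B"
  by (simp add: adj_def vec_eq_iff)
lemma adj_diff: "adj (A - B) = adj A - adj B"
  by (simp add: adj_def vec_eq_iff)
lemma adj_mscale: "adj (mscale c A) = mscale (cnj c) (adj A)"
  by (simp add: adj_def mscale_def vec_eq_iff)
lemma adj_mat1[simp]: "adj (mat 1 :: 'n::finite cmat) = mat 1"
  by (simp add: adj_def mat_def vec_eq_iff)
lemma adj_0[simp]: "adj 0 = 0"
  by (simp add: adj_def vec_eq_iff)
lemma adj_eq_0: "adj A = 0 \<longleftrightarrow> A = 0"
  by (metis adj_0 adj_adj)
lemma adj_sum: "finite J \<Longrightarrow> adj (\<Sum>j\<in>J. f j) = (\<Sum>j\<in>J. adj (f j))"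
  by (induction J rule: finite_induct) (auto simp: adj_add)

definition cinner :: "complex^'n::finite \<Rightarrow> complex^'n \<Rightarrow> complex" where
  "cinner x y = (\<Sum>i\<in>UNIV. cnj (x$i) * y$i)"

lemma cinner_adj: "cinner (A *v x) y = cinner x (adj A *v y)"
proof -
  have "cinner (A *v x) y = (\<Sum>i\<in>UNIV. \<Sum>j\<in>UNIV. cnj (A$i$j) * cnj (x$j) * y$i)"
    by (simp add: cinner_def matrix_vector_mult_def sum_distrib_right)
  also have "\<dots> = (\<Sum>j\<in>UNIV. \<Sum>i\<in>UNIV. cnj (A$i$j) * cnj (x$j) * y$i)"
    by (rule sum.swap)
  also have "\<dots> = cinner x (adj A *v y)"
    by (simp add: cinner_def matrix_vector_mult_def adj_def sum_distrib_left mult_ac)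
  finally show ?thesis .
qed

lemma cinner_cnj: "cnj (cinner x y) = cinner y x"
  by (simp add: cinner_def mult.commute)
lemma cinner_add_left: "cinner (x + y) z = cinner x z + cinner y z"
  by (simp add: cinner_def algebra_simps sum.distrib)
lemma cinner_add_right: "cinner z (x + y) = cinner z x + cinner z y"
  by (simp add: cinner_def algebra_simps sum.distrib)
lemma cinner_diff_left: "cinner (x - y) z = cinner x z - cinner y z"
  by (simp add: cinner_def algebra_simps sum_subtractf)
lemma cinner_diff_right: "cinner z (x - y) = cinner z x - cinner z y"
  by (simp add: cinner_def algebra_simps sum_subtractf)
lemma cinner_scale_left: "cinner (c *s x) z = cnj c * cinner x z"
  by (simp add: cinner_def algebra_simps sum_distrib_left)
lemma cinner_scale_right: "cinner z (c *s x) = c * cinner z x"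
  by (simp add: cinner_def algebra_simps sum_distrib_left)
lemma cinner_zero[simp]: "cinner 0 x = 0" "cinner x 0 = 0"
  by (simp_all add: cinner_def)

lemma cinner_self: "cinner x x = complex_of_real ((norm x)^2)"
proof -
  have "cinner x x = (\<Sum>i\<in>UNIV. complex_of_real ((cmod (x$i))^2))"
    by (simp add: cinner_def complex_norm_square[symmetric] mult.commute del: of_real_power)
  also have "\<dots> = complex_of_real ((norm x)^2)"
    by (simp add: norm_vec_def L2_set_def sum_nonneg)
  finally show ?thesis .
qed

lemma cinner_self_eq_0[simp]: "cinner x x = 0 \<longleftrightarrow> x = 0"
  by (simp add: cinner_self)

lemma Re_cinner_self: "Re (cinner x x) = (norm x)^2"
  by (simp add: cinner_self)

lemma is_projection_adj: "is_projection P \<Longrightarrow> adj P = P" by (simp add: is_projection_def)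
lemma is_projection_idem: "is_projection P \<Longrightarrow> P ** P = P" by (simp add: is_projection_def)

lemma mat1_neq0: "(mat 1 :: 'n::finite cmat) \<noteq> 0"
proof
  assume "(mat 1 :: 'n::finite cmat) = 0"
  then have "(mat 1 :: 'n cmat) $ undefined $ undefined = 0" by simp
  then show False by (simp add: mat_def)
qed



definition outer :: "complex^'n::finite \<Rightarrow> complex^'n \<Rightarrow> 'n cmat" where
  "outer u w = (\<chi> i j. u$i * cnj (w$j))"

lemma outer_mv: "outer u w *v x = cinner w x *s u"
  by (simp add: outer_def cinner_def matrix_vector_mult_def vec_eq_iff sum_distrib_left sum_distrib_right mult_ac)

lemma adj_outer: "adj (outer u u) = outer u u"
  by (simp add: outer_def adj_def vec_eq_iff mult.commute)

lemma cinner_self_real: "cnj (cinner u u) = cinner u u"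
  by (simp add: cinner_self)

lemma proj_exists:
  fixes B :: "(complex^'n::finite) set"
  assumes "finite B"
  shows "\<exists>P. is_projection P \<and> (\<forall>x. P *v x \<in> vec.span B) \<and> (\<forall>w\<in>vec.span B. P *v w = w)"
  using assms
proof (induction B rule: finite_induct)
  case empty
  show ?case by (rule exI[of _ 0]) (simp add: is_projection_def)
next
  case (insert b B)
  then obtain P where P: "is_projection P" "\<And>x. P *v x \<in> vec.span B" "\<And>w. w\<in>vec.span B \<Longrightarrow> P *v w = w"
    by blast
  have PP: "P *v (P *v x) = P *v x" for x using P by simp
  have Padj: "cinner (P *v x) y = cinner x (P *v y)" for x y
    using cinner_adj[of P x y] is_projection_adj[OF P(1)] by simp
  define u where "u = b - P *v b"
  have Pu: "P *v u = 0" by (simp add: u_def matrix_vector_mult_diff_distrib PP)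
  have spanB: "vec.span B \<subseteq> vec.span (insert b B)" by (rule vec.span_mono) auto
  have u_in: "u \<in> vec.span (insert b B)"
    unfolding u_def using spanB P(2)[of b]
    by (intro vec.span_diff) (auto intro: vec.span_base)
  show ?case
  proof (cases "u = 0")
    case True
    then have "b \<in> vec.span B" using P(2)[of b] by (simp add: u_def)
    then have "vec.span (insert b B) = vec.span B"
      by (simp add: vec.span_redundant)
    then show ?thesis using P by auto
  next
    case False
    define c where "c = cinner u u"
    have c0: "c \<noteq> 0" using False by (simp add: c_def)
    define P' where "P' = P + mscale (1 / c) (outer u u)"
    have P'mv: "P' *v x = P *v x + (cinner u x / c) *s u" for x
      by (simp add: P'_def matrix_vector_mult_add_rdistrib mscale_mv outer_mv)
    have range': "P' *v x \<in> vec.span (insert b B)" for x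
      unfolding P'mv using spanB P(2)[of x] u_in
      by (intro vec.span_add vec.span_scale) auto
    have fix': "P' *v w = w" if "w \<in> vec.span (insert b B)" for w
    proof -
      have "vec.subspace {w. P' *v w = w}"
        by (auto simp: vec.subspace_def matrix_vector_right_distrib mv_scale)
      moreover have "insert b B \<subseteq> {w. P' *v w = w}"
      proof
        fix y assume y: "y \<in> insert b B"
        show "y \<in> {w. P' *v w = w}"
        proof (cases "y = b")
          case True
          have "cinner u b = cinner u (u + P *v b)" by (simp add: u_def)
          also have "\<dots> = c" by (simp add: cinner_add_right c_def Padj[symmetric] Pu)
          finally have "cinner u b = c" .
          then show ?thesis using True c0 by (simp add: P'mv u_def)
        next
          case False
          then have yB: "y \<in> vec.span B" using y by (auto intro: vec.span_base)
          have "cinner u y = cinner u (P *v y)" using P(3)[OF yB] by simp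
          also have "\<dots> = 0" by (simp add: Padj[symmetric] Pu)
          finally show ?thesis using P(3)[OF yB] by (simp add: P'mv)
        qed
      qed
      ultimately have "vec.span (insert b B) \<subseteq> {w. P' *v w = w}"
        by (rule vec.span_minimal[rotated])
      then show ?thesis using that by auto
    qed
    have "is_projection P'"
      unfolding is_projection_def
    proof
      show "P' ** P' = P'"
        by (subst matrix_eq) (simp add: matrix_vector_mul_assoc[symmetric] fix' range')
      have "cnj (1 / c) = 1 / c" using cinner_self_real[of u] by (simp add: c_def)
      then show "adj P' = P'"
        by (simp add: P'_def adj_add adj_mscale adj_outer is_projection_adj[OF P(1)])
    qed
    then show ?thesis using range' fix' by blast
  qed
qed

lemma proj_onto:
  fixes W :: "(complex^'n::finite) set"
  assumes "vec.subspace W"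
  shows "\<exists>P. is_projection P \<and> (\<forall>x. P *v x \<in> W) \<and> (\<forall>w\<in>W. P *v w = w)"
proof -
  obtain B where B: "B \<subseteq> W" "vec.independent B" "W \<subseteq> vec.span B"
    by (rule vec.basis_exists)
  have "finite B" using B(2) by (rule vec.finiteI_independent)
  moreover have "vec.span B = W"
    using B assms vec.span_minimal by blast
  ultimately show ?thesis using proj_exists by metis
qed



lemma quad_zero:
  fixes a b :: real
  assumes "\<And>t. a * t + b * t^2 \<le> 0"
  shows "a = 0"
proof (rule ccontr)
  assume a0: "a \<noteq> 0"
  define c where "c = \<bar>b\<bar> + 1"
  have c: "c \<ge> 1" "c + b \<ge> 1" by (auto simp: c_def)
  define t where "t = a / c"
  have "a * t + b * t^2 = a^2 * (c + b) / c^2"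
    using c by (simp add: t_def field_simps power2_eq_square)
  also have "\<dots> > 0" using a0 c by (intro divide_pos_pos mult_pos_pos) auto
  finally show False using assms[of t] by simp
qed

lemma Re_mult_real: "Re (complex_of_real t * z) = t * Re z" by simp

lemma herm_neg_zero:
  fixes G :: "'n::finite cmat"
  assumes adjG: "adj G = G" and R: "vec.subspace R" and GR: "\<And>x. x \<in> R \<Longrightarrow> G *v x \<in> R"
    and neg: "\<And>x. x \<in> R \<Longrightarrow> Re (cinner x (G *v x)) \<le> 0"
    and v: "v \<in> R" and v0: "Re (cinner v (G *v v)) = 0"
  shows "G *v v = 0"
proof -
  define w where "w = G *v v"
  have wR: "w \<in> R" using GR[OF v] by (simp add: w_def)
  have sym: "Re (cinner v (G *v w)) = Re (cinner w (G *v v))"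
  proof -
    have "cinner v (G *v w) = cinner (G *v v) w" using cinner_adj[of G v w] adjG by simp
    also have "\<dots> = cnj (cinner w (G *v v))" by (simp add: cinner_cnj)
    finally show ?thesis by simp
  qed
  have "2 * Re (cinner w w) * t + Re (cinner w (G *v w)) * t^2 \<le> 0" for t :: real
  proof -
    let ?c = "complex_of_real t"
    have xR: "v + ?c *s w \<in> R" using R v wR by (simp add: vec.subspace_def)
    have "cinner (v + ?c *s w) (G *v (v + ?c *s w)) =
        cinner v (G *v v) + ?c * cinner v (G *v w) + ?c * cinner w (G *v v) + (?c * ?c) * cinner w (G *v w)"
      by (simp add: matrix_vector_right_distrib mv_scale cinner_add_left cinner_add_right
          cinner_scale_left cinner_scale_right algebra_simps)
    then have "Re (cinner (v + ?c *s w) (G *v (v + ?c *s w))) =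
        Re (cinner v (G *v v)) + t * Re (cinner v (G *v w)) + t * Re (cinner w (G *v v)) + (t*t) * Re (cinner w (G *v w))"
      by (simp only: plus_complex.sel Re_mult_real of_real_mult[symmetric])
    also have "\<dots> = 2 * Re (cinner w w) * t + Re (cinner w (G *v w)) * t^2"
      using v0 sym by (simp add: w_def power2_eq_square algebra_simps)
    finally show ?thesis using neg[OF xR] by simp
  qed
  then have "2 * Re (cinner w w) = 0" by (rule quad_zero)
  then have "Re (cinner w w) = 0" by simp
  then have "w = 0" by (simp add: Re_cinner_self)
  then show ?thesis by (simp add: w_def)
qed

lemma vec_subspace_real: "vec.subspace (R :: (complex^'n::finite) set) \<Longrightarrow> subspace R"
proof -
  assume R: "vec.subspace R"
  have "c *\<^sub>R x = complex_of_real c *s x" for c and x :: "complex^'n"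
    by (simp add: vec_eq_iff) (simp add: scaleR_conv_of_real)
  then show "subspace R" using R by (auto simp: subspace_def vec.subspace_def)
qed

lemma continuous_q: "continuous_on S (\<lambda>x::complex^'n::finite. Re (cinner x (H *v x)))"
  unfolding cinner_def matrix_vector_mult_def
  by (intro continuous_intros continuous_on_compose2[OF continuous_on_cnj]
      bounded_linear.continuous_on[OF bounded_linear_vec_nth]) auto

lemma herm_eigen:
  fixes H :: "'n::finite cmat"
  assumes adjH: "adj H = H" and R: "vec.subspace R" and HR: "\<And>x. x \<in> R \<Longrightarrow> H *v x \<in> R"
    and ne: "x0 \<in> R" "x0 \<noteq> 0"
  shows "\<exists>v\<in>R. v \<noteq> 0 \<and> (\<exists>\<mu>. H *v v = \<mu> *s v)"
proof -
  define q where "q x = Re (cinner x (H *v x))" for x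
  define K where "K = sphere 0 1 \<inter> R"
  have "closed R" using vec_subspace_real[OF R] by (rule closed_subspace)
  then have cK: "compact K" unfolding K_def by (intro compact_Int_closed) (auto simp: compact_sphere)
  have scl: "complex_of_real r *s x \<in> R" if "x \<in> R" for r x using R that by (simp add: vec.subspace_def)
  have nsc: "norm (complex_of_real r *s x) = \<bar>r\<bar> * norm x" for r and x :: "complex^'n"
  proof -
    have "complex_of_real r *s x = r *\<^sub>R x" by (simp add: vec_eq_iff) (simp add: scaleR_conv_of_real)
    then show ?thesis by simp
  qed
  define r0 where "r0 = 1 / norm x0"
  have "norm (complex_of_real r0 *s x0) = 1" using ne unfolding nsc r0_def by simp
  then have "complex_of_real r0 *s x0 \<in> K"
    using scl[OF ne(1)] by (simp add: K_def)
  then have neK: "K \<noteq> {}" by auto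
  have "continuous_on K q" unfolding q_def by (rule continuous_q)
  then obtain v where vK: "v \<in> K" and vmax: "\<And>y. y \<in> K \<Longrightarrow> q y \<le> q v"
    using continuous_attains_sup[OF cK neK] by blast
  define M where "M = q v"
  define G where "G = H - mscale (complex_of_real M) (mat 1)"
  have Gmv: "G *v x = H *v x - complex_of_real M *s x" for x
    by (simp add: G_def matrix_vector_mult_diff_rdistrib mscale_mv)
  have ReG: "Re (cinner x (G *v x)) = q x - M * (norm x)^2" for x
    by (simp add: Gmv cinner_diff_right cinner_scale_right q_def Re_cinner_self)
  have qscale: "q (complex_of_real r *s x) = r^2 * q x" for r x
  proof -
    have "cinner (complex_of_real r *s x) (H *v (complex_of_real r *s x)) = complex_of_real (r^2) * cinner x (H *v x)"
      by (simp add: mv_scale cinner_scale_left cinner_scale_right power2_eq_square)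
    then show ?thesis by (simp add: q_def)
  qed
  have adjG: "adj G = G"
    by (simp add: G_def adj_diff adj_mscale adjH)
  have GR: "G *v x \<in> R" if "x \<in> R" for x
    using HR[OF that] scl[OF that] R by (simp add: Gmv vec.subspace_def vec.subspace_diff)
  have neg: "Re (cinner x (G *v x)) \<le> 0" if xR: "x \<in> R" for x
  proof (cases "x = 0")
    case True then show ?thesis by simp
  next
    case False
    define r where "r = 1 / norm x"
    have r: "r > 0" using False by (simp add: r_def)
    have "norm (complex_of_real r *s x) = 1" using False unfolding nsc r_def by simp
    then have "complex_of_real r *s x \<in> K" using scl[OF xR] by (simp add: K_def)
    then have "q (complex_of_real r *s x) \<le> M" using vmax by (simp add: M_def)
    then have "r^2 * q x \<le> M" by (simp add: qscale)
    then have "q x \<le> M * (norm x)^2" using False by (simp add: r_def field_simps)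
    then show ?thesis by (simp add: ReG)
  qed
  have vR: "v \<in> R" and nv: "norm v = 1" using vK by (auto simp: K_def)
  have "Re (cinner v (G *v v)) = 0" by (simp add: ReG nv M_def)
  then have "G *v v = 0" using herm_neg_zero[OF adjG R GR neg vR] by blast
  then have "H *v v = complex_of_real M *s v" by (simp add: Gmv)
  moreover have "v \<noteq> 0" using nv by auto
  ultimately show ?thesis using vR by blast
qed



definition staralg :: "'n::finite cmat set \<Rightarrow> bool" where
  "staralg A \<longleftrightarrow> M.subspace A \<and> mat 1 \<in> A \<and> (\<forall>X\<in>A. \<forall>Y\<in>A. X ** Y \<in> A) \<and> (\<forall>X\<in>A. adj X \<in> A)"

definition irr :: "'n::finite cmat set \<Rightarrow> bool" where
  "irr A \<longleftrightarrow> (\<forall>P. is_projection P \<longrightarrow> (\<forall>X\<in>A. P ** X = X ** P) \<longrightarrow> P = 0 \<or> P = mat 1)"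

definition rk :: "'n::finite cmat \<Rightarrow> nat" where
  "rk Z = vec.dim (range ((*v) Z))"

lemma range_subspace: "vec.subspace (range ((*v) (Z::'n::finite cmat)))"
  unfolding vec.subspace_def
proof (intro conjI ballI allI)
  show "0 \<in> range ((*v) Z)" by (rule range_eqI[where x=0]) simp
  fix x y c assume "x \<in> range ((*v) Z)" "y \<in> range ((*v) Z)"
  then obtain a b where "x = Z *v a" "y = Z *v b" by auto
  then have "x + y = Z *v (a + b)" "c *s x = Z *v (c *s a)"
    by (auto simp: matrix_vector_right_distrib mv_scale)
  then show "x + y \<in> range ((*v) Z)" "c *s x \<in> range ((*v) Z)" by auto
qed

lemma herm_range_perp:
  assumes "adj Z = Z" "Z *v v = 0" "v \<in> range ((*v) Z)"
  shows "v = 0"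
proof -
  obtain x where x: "v = Z *v x" using assms(3) by auto
  have "cinner v v = cinner x (Z *v v)" using cinner_adj[of Z x v] assms(1) x by simp
  then show ?thesis using assms(2) by simp
qed

lemma rank_lt:
  fixes Z :: "'n::finite cmat"
  assumes "adj Z = Z" "range ((*v) Z) \<subseteq> R" "vec.subspace R" "v \<in> R" "v \<noteq> 0" "Z *v v = 0"
  shows "rk Z < vec.dim R"
proof -
  have "v \<notin> range ((*v) Z)" using herm_range_perp[of Z v] assms by auto
  moreover have "vec.span (range ((*v) Z)) = range ((*v) Z)" using range_subspace[of Z] by simp
  moreover have "vec.span R = R" using assms(3) by simp
  moreover have "range ((*v) Z) \<subset> R" using assms \<open>v \<notin> range ((*v) Z)\<close> by auto
  ultimately have "vec.span (range ((*v) Z)) \<subset> vec.span R"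
    by (simp only:)
  then show ?thesis unfolding rk_def by (rule vec.dim_psubset)
qed

lemma eigen_real:
  assumes "adj H = H" "H *v v = \<mu> *s v" "v \<noteq> 0"
  shows "cnj \<mu> = \<mu>"
proof -
  have "cinner (H *v v) v = cinner v (H *v v)" using cinner_adj[of H v v] assms(1) by simp
  then have "cnj \<mu> * cinner v v = \<mu> * cinner v v"
    using assms(2) by (simp add: cinner_scale_left cinner_scale_right)
  then show ?thesis using assms(3) by simp
qed

lemma staralgD:
  assumes "staralg A"
  shows "M.subspace A" "mat 1 \<in> A" "\<And>X Y. X \<in> A \<Longrightarrow> Y \<in> A \<Longrightarrow> X ** Y \<in> A" "\<And>X. X \<in> A \<Longrightarrow> adj X \<in> A"
  using assms by (auto simp: staralg_def)

lemma transitive: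
  fixes A :: "'n::finite cmat set"
  assumes A: "staralg A" and irr: "irr A" and v0: "v \<noteq> 0"
  shows "\<exists>X\<in>A. X *v v = y"
proof -
  note AD = staralgD[OF A]
  define W where "W = {X *v v | X. X \<in> A}"
  have W: "vec.subspace W"
    unfolding vec.subspace_def W_def
  proof (intro conjI allI impI ballI)
    show "0 \<in> {X *v v |X. X \<in> A}" using M.subspace_0[OF AD(1)] by force
    fix c x y assume "x \<in> {X *v v |X. X \<in> A}" "y \<in> {X *v v |X. X \<in> A}"
    then obtain X Y where "X \<in> A" "Y \<in> A" "x = X *v v" "y = Y *v v" by auto
    have "X + Y \<in> A" "mscale c X \<in> A"
      using M.subspace_add[OF AD(1)] M.subspace_scale[OF AD(1)] \<open>X \<in> A\<close> \<open>Y \<in> A\<close> by auto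
    moreover have "x + y = (X + Y) *v v" "c *s x = mscale c X *v v"
      using \<open>x = X *v v\<close> \<open>y = Y *v v\<close>
      by (auto simp: matrix_vector_mult_add_rdistrib mscale_mv)
    ultimately show "x + y \<in> {X *v v |X. X \<in> A}" "c *s x \<in> {X *v v |X. X \<in> A}"
      by blast+
  qed
  obtain P where P: "is_projection P" "\<And>x. P *v x \<in> W" "\<And>w. w \<in> W \<Longrightarrow> P *v w = w"
    using proj_onto[OF W] by blast
  have key: "P ** X ** P = X ** P" if "X \<in> A" for X
  proof (subst matrix_eq, intro allI)
    fix x
    obtain Y where Y: "Y \<in> A" "P *v x = Y *v v" using P(2)[of x] by (auto simp: W_def)
    have "X *v (P *v x) \<in> W" using Y AD(3)[OF that Y(1)] by (auto simp: W_def matrix_vector_mul_assoc)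
    then show "(P ** X ** P) *v x = (X ** P) *v x"
      using P(3) by (simp add: matrix_vector_mul_assoc[symmetric])
  qed
  have comm: "P ** X = X ** P" if "X \<in> A" for X
  proof -
    have "P ** adj X ** P = adj X ** P" using key AD(4)[OF that] by simp
    then have "adj (P ** adj X ** P) = adj (adj X ** P)" by simp
    then have "P ** X ** P = P ** X"
      using is_projection_adj[OF P(1)] by (simp add: adj_mult matrix_mul_assoc)
    then show ?thesis using key[OF that] by simp
  qed
  have vW: "v \<in> W" using AD(2) by (force simp: W_def)
  have "P \<noteq> 0" using P(3)[OF vW] v0 by auto
  then have "P = mat 1" using irr P(1) comm by (auto simp: irr_def)
  then have "y \<in> W" using P(2)[of y] by simp
  then show ?thesis by (auto simp: W_def)
qed



lemma exists_nonzero_mv: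
  assumes "(Z::'n::finite cmat) \<noteq> 0" shows "\<exists>x. Z *v x \<noteq> 0"
  using assms matrix_eq[of Z 0] by auto

lemma min_proj:
  fixes A :: "'n::finite cmat set"
  assumes A: "staralg A"
  shows "\<exists>E\<in>A. is_projection E \<and> E \<noteq> 0 \<and>
     (\<forall>Z\<in>A. adj Z = Z \<longrightarrow> Z \<noteq> 0 \<longrightarrow> rk E \<le> rk Z)"
proof -
  note AD = staralgD[OF A]
  define K where "K = {Z \<in> A. adj Z = Z \<and> Z \<noteq> 0}"
  have "mat 1 \<in> K" using AD(2) mat1_neq0 by (simp add: K_def)
  then obtain T where TK: "T \<in> K" and Tmin: "\<And>Z. Z \<in> K \<Longrightarrow> rk T \<le> rk Z"
    using ex_has_least_nat[of "\<lambda>Z. Z \<in> K" "mat 1" rk] by blast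
  have TA: "T \<in> A" and adjT: "adj T = T" and T0: "T \<noteq> 0" using TK by (auto simp: K_def)
  define R where "R = range ((*v) T)"
  have R: "vec.subspace R" unfolding R_def by (rule range_subspace)
  obtain x0 where x0: "T *v x0 \<noteq> 0" using exists_nonzero_mv[OF T0] by blast
  obtain v \<mu> where vR: "v \<in> R" and v0: "v \<noteq> 0" and Tv: "T *v v = \<mu> *s v"
    using herm_eigen[OF adjT R, of "T *v x0"] x0 by (auto simp: R_def)
  have mureal: "cnj \<mu> = \<mu>" using eigen_real[OF adjT Tv v0] .
  have mu0: "\<mu> \<noteq> 0"
  proof
    assume "\<mu> = 0"
    then have "T *v v = 0" using Tv by simp
    then show False using herm_range_perp[OF adjT _ ] vR v0 by (auto simp: R_def)
  qed
  define Z where "Z = T ** T - mscale \<mu> T"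
  have ZA: "Z \<in> A" unfolding Z_def
    using AD(3)[OF TA TA] M.subspace_scale[OF AD(1) TA] M.subspace_diff[OF AD(1)] by blast
  have adjZ: "adj Z = Z" by (simp add: Z_def adj_diff adj_mult adj_mscale adjT mureal)
  have Zmv: "Z *v x = T *v (T *v x - \<mu> *s x)" for x
    by (simp add: Z_def matrix_vector_mult_diff_rdistrib matrix_vector_mult_diff_distrib
        mscale_mv mv_scale matrix_vector_mul_assoc)
  have ZR: "range ((*v) Z) \<subseteq> R" by (auto simp: R_def Zmv)
  have Zv: "Z *v v = 0" by (simp add: Zmv Tv mv_scale)
  have "Z = 0"
  proof (rule ccontr)
    assume "Z \<noteq> 0"
    then have "Z \<in> K" using ZA adjZ by (simp add: K_def)
    then have "rk T \<le> rk Z" by (rule Tmin)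
    moreover have "rk Z < rk T" using rank_lt[OF adjZ ZR R vR v0 Zv] by (simp add: rk_def R_def)
    ultimately show False by simp
  qed
  then have TT: "T ** T = mscale \<mu> T" by (simp add: Z_def)
  define E where "E = mscale (1 / \<mu>) T"
  have EA: "E \<in> A" unfolding E_def using M.subspace_scale[OF AD(1) TA] .
  have "E ** E = E"
    using mu0 by (simp add: E_def mscale_mult_left mscale_mult_right TT mscale_mscale power2_eq_square)
  moreover have "adj E = E"
  proof -
    have "cnj (1 / \<mu>) = 1 / \<mu>" using mureal by simp
    then show ?thesis by (simp add: E_def adj_mscale adjT)
  qed
  ultimately have Eproj: "is_projection E" by (simp add: is_projection_def)
  have E0: "E \<noteq> 0" using T0 mu0 unfolding E_def
    by (metis mscale_mscale mscale_1 mscale_0(2) nonzero_divide_eq_eq divide_self_if mult.commute)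
  have "range ((*v) E) = R"
  proof
    show "range ((*v) E) \<subseteq> R" by (auto simp: E_def R_def mscale_mv mv_scale[symmetric])
    show "R \<subseteq> range ((*v) E)"
    proof
      fix y assume "y \<in> R"
      then obtain x where "y = T *v x" by (auto simp: R_def)
      then have "y = E *v (\<mu> *s x)" using mu0 by (simp add: E_def mscale_mv mv_scale)
      then show "y \<in> range ((*v) E)" by auto
    qed
  qed
  then have "rk E = rk T" by (simp add: rk_def R_def)
  then have "\<forall>Z\<in>A. adj Z = Z \<longrightarrow> Z \<noteq> 0 \<longrightarrow> rk E \<le> rk Z" using Tmin by (auto simp: K_def)
  then show ?thesis using EA Eproj E0 by blast
qed



lemma compress_herm:
  fixes A :: "'n::finite cmat set"
  assumes A: "staralg A" and EA: "E \<in> A" and Ep: "is_projection E"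
    and Emin: "\<forall>Z\<in>A. adj Z = Z \<longrightarrow> Z \<noteq> 0 \<longrightarrow> rk E \<le> rk Z"
    and E0: "E \<noteq> 0" and YA: "Y \<in> A" and adjY: "adj Y = Y"
  shows "\<exists>c. E ** Y ** E = mscale c E"
proof -
  note AD = staralgD[OF A]
  have adjE: "adj E = E" and EE: "E ** E = E" using Ep by (auto simp: is_projection_def)
  define R where "R = range ((*v) E)"
  have R: "vec.subspace R" unfolding R_def by (rule range_subspace)
  have Efix: "E *v w = w" if wR: "w \<in> R" for w
  proof -
    obtain x where "w = E *v x" using wR by (auto simp: R_def)
    then show ?thesis by (simp add: matrix_vector_mul_assoc EE)
  qed
  define L where "L = E ** Y ** E"
  have LA: "L \<in> A" unfolding L_def using AD(3) EA YA by blast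
  have adjL: "adj L = L" by (simp add: L_def adj_mult adjE adjY matrix_mul_assoc)
  have LR: "L *v x \<in> R" for x
    by (simp add: R_def L_def matrix_vector_mul_assoc[symmetric])
  obtain x0 where x0: "E *v x0 \<noteq> 0" using exists_nonzero_mv[OF E0] by blast
  obtain w \<mu> where wR: "w \<in> R" and w0: "w \<noteq> 0" and Lw: "L *v w = \<mu> *s w"
    using herm_eigen[OF adjL R LR, of "E *v x0"] x0 by (auto simp: R_def)
  have mureal: "cnj \<mu> = \<mu>" using eigen_real[OF adjL Lw w0] .
  define Z where "Z = L - mscale \<mu> E"
  have ZA: "Z \<in> A" unfolding Z_def
    using LA M.subspace_scale[OF AD(1) EA] M.subspace_diff[OF AD(1)] by blast
  have adjZ: "adj Z = Z" by (simp add: Z_def adj_diff adjL adj_mscale adjE mureal)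
  have Zmv: "Z *v x = E *v ((Y ** E) *v x - \<mu> *s x)" for x
    by (simp add: Z_def L_def matrix_vector_mult_diff_rdistrib matrix_vector_mult_diff_distrib
        mscale_mv mv_scale matrix_vector_mul_assoc matrix_mul_assoc)
  have ZR: "range ((*v) Z) \<subseteq> R" by (auto simp: R_def Zmv)
  have Zw: "Z *v w = 0" by (simp add: Z_def matrix_vector_mult_diff_rdistrib Lw mscale_mv Efix[OF wR])
  have "Z = 0"
  proof (rule ccontr)
    assume "Z \<noteq> 0"
    then have "rk E \<le> rk Z" using Emin ZA adjZ by blast
    moreover have "rk Z < rk E" using rank_lt[OF adjZ ZR R wR w0 Zw] by (simp add: rk_def R_def)
    ultimately show False by simp
  qed
  then show ?thesis by (auto simp: Z_def L_def)
qed

lemma compress: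
  fixes A :: "'n::finite cmat set"
  assumes A: "staralg A" and EA: "E \<in> A" and Ep: "is_projection E"
    and Emin: "\<forall>Z\<in>A. adj Z = Z \<longrightarrow> Z \<noteq> 0 \<longrightarrow> rk E \<le> rk Z"
    and E0: "E \<noteq> 0" and YA: "Y \<in> A"
  shows "\<exists>c. E ** Y ** E = mscale c E"
proof -
  note AD = staralgD[OF A]
  define H1 where "H1 = mscale (1/2) (Y + adj Y)"
  define H2 where "H2 = mscale (- \<i>/2) (Y - adj Y)"
  have H1A: "H1 \<in> A" unfolding H1_def
    using AD(4)[OF YA] YA M.subspace_add[OF AD(1)] M.subspace_scale[OF AD(1)] by blast
  have H2A: "H2 \<in> A" unfolding H2_def
    using AD(4)[OF YA] YA M.subspace_diff[OF AD(1)] M.subspace_scale[OF AD(1)] by blast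
  have a1: "adj H1 = H1" by (simp add: H1_def adj_mscale adj_add add.commute)
  have a2: "adj H2 = H2"
  proof -
    have "adj H2 = mscale (\<i>/2) (adj Y - Y)" by (simp add: H2_def adj_def mscale_def vec_eq_iff)
    also have "\<dots> = H2" by (simp add: H2_def mscale_def vec_eq_iff algebra_simps)
    finally show ?thesis .
  qed
  have Ydec: "Y = H1 + mscale \<i> H2"
    by (simp add: H1_def H2_def mscale_def vec_eq_iff algebra_simps)
  obtain c1 where c1: "E ** H1 ** E = mscale c1 E" using compress_herm[OF A EA Ep Emin E0 H1A a1] by blast
  obtain c2 where c2: "E ** H2 ** E = mscale c2 E" using compress_herm[OF A EA Ep Emin E0 H2A a2] by blast
  have "E ** Y ** E = E ** H1 ** E + mscale \<i> (E ** H2 ** E)"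
    by (simp add: Ydec matrix_add_ldistrib matrix_add_rdistrib' mscale_mult_left mscale_mult_right)
  also have "\<dots> = mscale (c1 + \<i> * c2) E" by (simp add: c1 c2 mscale_mscale mscale_add2)
  finally show ?thesis by blast
qed

lemma cinner_axis: "cinner (axis b 1) x = x $ b"
  by (simp add: cinner_def axis_def if_distrib if_distribR cong: if_cong)

lemma burnside:
  fixes A :: "'n::finite cmat set"
  assumes A: "staralg A" and irr: "irr A"
  shows "A = UNIV"
proof -
  note AD = staralgD[OF A]
  obtain E where EA: "E \<in> A" and Ep: "is_projection E" and E0: "E \<noteq> 0"
    and Emin: "\<forall>Z\<in>A. adj Z = Z \<longrightarrow> Z \<noteq> 0 \<longrightarrow> rk E \<le> rk Z"
    using min_proj[OF A] by blast
  have adjE: "adj E = E" and EE: "E ** E = E" using Ep by (auto simp: is_projection_def)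
  obtain x0 where x0: "E *v x0 \<noteq> 0" using exists_nonzero_mv[OF E0] by blast
  define e where "e = E *v x0"
  have e0: "e \<noteq> 0" using x0 by (simp add: e_def)
  have Ee: "E *v e = e" by (simp add: e_def matrix_vector_mul_assoc EE)
  have ce0: "cinner e e \<noteq> 0" using e0 by simp
  have EEx: "E *v (E *v x) = E *v x" for x by (simp add: matrix_vector_mul_assoc EE)
  have Emv: "E *v x = (cinner e x / cinner e e) *s e" for x
  proof -
    obtain X where XA: "X \<in> A" and Xe: "X *v e = E *v x" using transitive[OF A irr e0] by blast
    obtain c where c: "E ** X ** E = mscale c E" using compress[OF A EA Ep Emin E0 XA] by blast
    have "(E ** X ** E) *v e = E *v x"
      by (simp add: matrix_vector_mul_assoc[symmetric] Ee Xe EEx)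
    then have Ex: "E *v x = c *s e" by (simp add: c mscale_mv Ee)
    have "cinner e (E *v x) = cinner e x"
      using cinner_adj[of E e x] adjE Ee by simp
    then have "c * cinner e e = cinner e x" by (simp add: Ex cinner_scale_right)
    then have "c = cinner e x / cinner e e" using ce0 by (simp add: field_simps)
    then show ?thesis using Ex by simp
  qed
  have UA: "U a b \<in> A" for a b
  proof -
    obtain X where XA: "X \<in> A" and Xe: "X *v e = axis a 1" using transitive[OF A irr e0] by blast
    obtain Y where YA: "Y \<in> A" and Ye: "Y *v e = axis b 1" using transitive[OF A irr e0] by blast
    have "X ** E ** adj Y \<in> A" using AD(3) AD(4) XA EA YA by blast
    then have inA: "mscale (cinner e e) (X ** E ** adj Y) \<in> A" using M.subspace_scale[OF AD(1)] by blast
    have "mscale (cinner e e) (X ** E ** adj Y) = U a b"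
    proof (subst matrix_eq, intro allI)
      fix x
      have "cinner e (adj Y *v x) = x $ b"
        using cinner_adj[of Y e x] Ye cinner_axis[of b x] by simp
      then have "mscale (cinner e e) (X ** E ** adj Y) *v x = x $ b *s axis a 1"
        using ce0 by (simp add: mscale_mv matrix_vector_mul_assoc[symmetric] Emv mv_scale Xe)
      also have "\<dots> = U a b *v x"
        by (simp add: U_def matrix_vector_mult_def vec_eq_iff axis_def if_distrib if_distribR cong: if_cong)
      finally show "mscale (cinner e e) (X ** E ** adj Y) *v x = U a b *v x" .
    qed
    then show ?thesis using inA by simp
  qed
  have "M \<in> A" for M
  proof -
    have "(\<Sum>a\<in>UNIV. \<Sum>b\<in>UNIV. mscale (M$a$b) (U a b)) \<in> A"
      by (intro M.subspace_sum[OF AD(1)] M.subspace_scale[OF AD(1)] UA)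
    then show ?thesis using mat_decomp[of M] by simp
  qed
  then show ?thesis by auto
qed



lemma subpow_subspace: "M.subspace (subpow S k)"
  by (cases k) (simp_all add: cspan_eq subprod_def)

lemma subpow_Suc: "subpow S (Suc k) = M.span {X ** Y | X Y. X \<in> subpow S k \<and> Y \<in> S}"
  by (simp add: subprod_def cspan_eq)

lemma subpow_0: "subpow S 0 = range (\<lambda>c. mscale c (mat 1))"
  by (simp add: cspan_eq M.span_singleton)

declare subpow.simps[simp del]

lemma subpow_gen: "X \<in> subpow S k \<Longrightarrow> Y \<in> S \<Longrightarrow> X ** Y \<in> subpow S (Suc k)"
  unfolding subpow_Suc by (rule M.span_base) blast

lemma subpow_one: "mat 1 \<in> S \<Longrightarrow> mat 1 \<in> subpow S k"
proof (induction k)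
  case 0 show ?case unfolding subpow_0 by (rule range_eqI[where x=1]) simp
next
  case (Suc k)
  then have "mat 1 ** mat 1 \<in> subpow S (Suc k)" by (intro subpow_gen) auto
  then show ?case by simp
qed

lemma subpow_mono1: "mat 1 \<in> S \<Longrightarrow> X \<in> subpow S k \<Longrightarrow> X \<in> subpow S (Suc k)"
  using subpow_gen[of X S k "mat 1"] by simp

lemma subpow_mono: "mat 1 \<in> S \<Longrightarrow> k \<le> l \<Longrightarrow> subpow S k \<subseteq> subpow S l"
proof (induction l)
  case 0 then show ?case by simp
next
  case (Suc l)
  then show ?case
    using subpow_mono1[OF Suc.prems(1)] by (cases "k = Suc l") (auto simp: le_Suc_eq)
qed

lemma S_sub_subpow1: "S \<subseteq> subpow S 1"
proof
  fix W assume "W \<in> S"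
  moreover have "mat 1 \<in> subpow S 0" unfolding subpow_0 by (rule range_eqI[where x=1]) simp
  ultimately have "mat 1 ** W \<in> subpow S (Suc 0)" by (intro subpow_gen)
  then show "W \<in> subpow S 1" by simp
qed

lemma span_into:
  assumes "Y \<in> M.span G" "M.subspace T" "\<And>g. g \<in> G \<Longrightarrow> g \<in> T"
  shows "Y \<in> T"
  using M.span_minimal[of G T] assms by blast

lemma subpow_mult: "X \<in> subpow S a \<Longrightarrow> Y \<in> subpow S b \<Longrightarrow> X ** Y \<in> subpow S (a + b)"
proof (induction b arbitrary: Y)
  case 0
  then obtain c where "Y = mscale c (mat 1)" unfolding subpow_0 by blast
  then show ?case using M.subspace_scale[OF subpow_subspace 0(1)] by (simp add: mscale_mult_right)
next
  case (Suc b)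
  define T where "T = {Y. X ** Y \<in> subpow S (a + Suc b)}"
  have T: "M.subspace T"
    unfolding T_def M.subspace_def
    using M.subspace_0[OF subpow_subspace] M.subspace_add[OF subpow_subspace]
      M.subspace_scale[OF subpow_subspace]
    by (auto simp: matrix_add_ldistrib mscale_mult_right)
  have "Y \<in> T"
  proof (rule span_into[OF _ T])
    show "Y \<in> M.span {X ** Y | X Y. X \<in> subpow S b \<and> Y \<in> S}" using Suc.prems(2) by (simp add: subpow_Suc)
    fix g assume "g \<in> {X ** Y | X Y. X \<in> subpow S b \<and> Y \<in> S}"
    then obtain Z W where g: "g = Z ** W" "Z \<in> subpow S b" "W \<in> S" by auto
    have "X ** Z \<in> subpow S (a + b)" using Suc.IH[OF Suc.prems(1) g(2)] .
    then have "(X ** Z) ** W \<in> subpow S (Suc (a + b))" using g(3) by (rule subpow_gen)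
    then show "g \<in> T" by (simp add: T_def g(1) matrix_mul_assoc)
  qed
  then show ?case by (simp add: T_def)
qed

lemma subpow_adj:
  assumes adjS: "\<And>A. A \<in> S \<Longrightarrow> adj A \<in> S"
  shows "X \<in> subpow S k \<Longrightarrow> adj X \<in> subpow S k"
proof (induction k arbitrary: X)
  case 0
  then obtain c where "X = mscale c (mat 1)" unfolding subpow_0 by blast
  then show ?case unfolding subpow_0 by (auto simp: adj_mscale)
next
  case (Suc k)
  define T where "T = {Y. adj Y \<in> subpow S (Suc k)}"
  have T: "M.subspace T"
    unfolding T_def M.subspace_def
    using M.subspace_0[OF subpow_subspace] M.subspace_add[OF subpow_subspace]
      M.subspace_scale[OF subpow_subspace]
    by (auto simp: adj_add adj_mscale)
  have "X \<in> T"
  proof (rule span_into[OF _ T])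
    show "X \<in> M.span {X ** Y | X Y. X \<in> subpow S k \<and> Y \<in> S}" using Suc.prems by (simp add: subpow_Suc)
    fix g assume "g \<in> {X ** Y | X Y. X \<in> subpow S k \<and> Y \<in> S}"
    then obtain Z W where g: "g = Z ** W" "Z \<in> subpow S k" "W \<in> S" by auto
    have "adj W \<in> subpow S 1" using adjS[OF g(3)] S_sub_subpow1 by blast
    then have "adj W ** adj Z \<in> subpow S (1 + k)" using Suc.IH[OF g(2)] by (rule subpow_mult)
    then show "g \<in> T" by (simp add: T_def g(1) adj_mult)
  qed
  then show ?case by (simp add: T_def)
qed

lemma subpow_comm:
  assumes comm: "\<And>A. A \<in> S \<Longrightarrow> Q ** A = A ** Q"
  shows "X \<in> subpow S k \<Longrightarrow> Q ** X = X ** Q"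
proof (induction k arbitrary: X)
  case 0
  then obtain c where "X = mscale c (mat 1)" unfolding subpow_0 by blast
  then show ?case by (simp add: mscale_mult_right mscale_mult_left)
next
  case (Suc k)
  define T where "T = {Y. Q ** Y = Y ** Q}"
  have T: "M.subspace T"
    unfolding T_def M.subspace_def
    by (auto simp: matrix_add_ldistrib matrix_add_rdistrib' mscale_mult_right mscale_mult_left)
  have "X \<in> T"
  proof (rule span_into[OF _ T])
    show "X \<in> M.span {X ** Y | X Y. X \<in> subpow S k \<and> Y \<in> S}" using Suc.prems by (simp add: subpow_Suc)
    fix g assume "g \<in> {X ** Y | X Y. X \<in> subpow S k \<and> Y \<in> S}"
    then obtain Z W where g: "g = Z ** W" "Z \<in> subpow S k" "W \<in> S" by auto
    have "Q ** (Z ** W) = Z ** (Q ** W)" using Suc.IH[OF g(2)] by (simp add: matrix_mul_assoc)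
    also have "\<dots> = (Z ** W) ** Q" using comm[OF g(3)] by (simp add: matrix_mul_assoc)
    finally show "g \<in> T" by (simp add: T_def g(1))
  qed
  then show ?case by (simp add: T_def)
qed

lemma graph_count:
  fixes V :: "'a set"
  assumes fin: "finite V" and ne: "V \<noteq> {}"
    and conn: "\<And>J. J \<subseteq> V \<Longrightarrow> J \<noteq> {} \<Longrightarrow> J \<noteq> V \<Longrightarrow> \<exists>j\<in>J. \<exists>i\<in>V-J. E i j"
    and sym: "\<And>i j. E i j \<Longrightarrow> E j i"
  shows "2 * (card V - 1) \<le> card {(i,j). i \<in> V \<and> j \<in> V \<and> i \<noteq> j \<and> E i j}"
proof -
  define ed where "ed C = {(i,j). i \<in> C \<and> j \<in> C \<and> i \<noteq> j \<and> E i j}" for C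
  have fin_ed: "finite (ed C)" if "C \<subseteq> V" for C
    using finite_subset[of "ed C" "V \<times> V"] fin that by (auto simp: ed_def)
  have "\<forall>k. 1 \<le> k \<longrightarrow> k \<le> card V \<longrightarrow> (\<exists>C\<subseteq>V. card C = k \<and> 2 * (k - 1) \<le> card (ed C))"
  proof (intro allI)
    fix k show "1 \<le> k \<longrightarrow> k \<le> card V \<longrightarrow> (\<exists>C\<subseteq>V. card C = k \<and> 2 * (k - 1) \<le> card (ed C))"
    proof (induction k)
      case 0 then show ?case by simp
    next
      case (Suc k)
      show ?case
      proof (intro impI)
        assume k: "Suc k \<le> card V"
        show "\<exists>C\<subseteq>V. card C = Suc k \<and> 2 * (Suc k - 1) \<le> card (ed C)"
        proof (cases "k = 0")
          case True
          obtain x where "x \<in> V" using ne by auto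
          then show ?thesis using True by (intro exI[of _ "{x}"]) auto
        next
          case False
          then obtain C where C: "C \<subseteq> V" "card C = k" "2 * (k - 1) \<le> card (ed C)"
            using Suc.IH k by auto
          have "C \<noteq> {}" using C(2) False by auto
          moreover have "C \<noteq> V" using C(2) k by auto
          ultimately obtain j i where j: "j \<in> C" and i: "i \<in> V - C" and Eij: "E i j"
            using conn[OF C(1)] by blast
          define C' where "C' = insert i C"
          have C'V: "C' \<subseteq> V" using C(1) i by (auto simp: C'_def)
          have cC': "card C' = Suc k" using C(2) i finite_subset[OF C(1) fin] by (auto simp: C'_def)
          have ij: "i \<noteq> j" using i j by auto
          have sub: "ed C \<union> {(i,j),(j,i)} \<subseteq> ed C'"
            using C(1) Eij sym[OF Eij] ij j by (auto simp: ed_def C'_def)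
          have disj: "(i,j) \<notin> ed C" "(j,i) \<notin> ed C" using i by (auto simp: ed_def)
          have "card (ed C \<union> {(i,j),(j,i)}) = card (ed C) + 2"
            using disj ij fin_ed[OF C(1)] by (simp add: card_insert_if)
          moreover have "card (ed C \<union> {(i,j),(j,i)}) \<le> card (ed C')"
            by (rule card_mono[OF fin_ed[OF C'V] sub])
          ultimately have "2 * (Suc k - 1) \<le> card (ed C')" using C(3) False by simp
          then show ?thesis using C'V cC' by blast
        qed
      qed
    qed
  qed
  then obtain C where C: "C \<subseteq> V" "card C = card V" "2 * (card V - 1) \<le> card (ed C)"
  proof -
    have "1 \<le> card V" using ne fin by (simp add: Suc_leI card_gt_0_iff)
    then show ?thesis using that \<open>\<forall>k. _\<close> by blast
  qed
  have "C = V" using card_subset_eq[OF fin C(1) C(2)] .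
  then show ?thesis using C(3) by (simp add: ed_def)
qed




lemma central:
  fixes Q :: "'n::finite cmat"
  assumes "\<And>a b. Q ** U a b = U a b ** Q"
  shows "Q = mscale (Q$k$k) (mat 1)"
proof -
  have e1: "(Q ** U a b)$i$b = Q$i$a" for a b i
    by (simp add: matrix_matrix_mult_def U_def if_distrib if_distribR sum.delta' cong: if_cong)
  have e2: "(U a b ** Q)$i$b = (if i = a then Q$b$b else 0)" for a b i
    by (simp add: matrix_matrix_mult_def U_def if_distrib if_distribR sum.delta' cong: if_cong)
  define c where "c = Q$k$k"
  have "Q$i$a = (if i = a then c else 0)" for i a
  proof -
    have "Q$i$a = (Q ** U a k)$i$k" by (rule e1[symmetric])
    also have "\<dots> = (U a k ** Q)$i$k" by (simp only: assms)
    also have "\<dots> = (if i = a then Q$k$k else 0)" by (rule e2)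
    finally show ?thesis by (simp add: c_def)
  qed
  then show ?thesis by (simp add: vec_eq_iff mscale_def mat_def c_def[symmetric])
qed

lemma mscale_eq0: "mscale c X = 0 \<Longrightarrow> X \<noteq> 0 \<Longrightarrow> c = 0"
  by (auto simp: mscale_def vec_eq_iff)

lemma staralg_union:
  assumes qg: "quantum_graph S"
  shows "staralg (\<Union>k. subpow S k)"
proof -
  have one: "mat 1 \<in> S" and adjS: "\<And>A. A \<in> S \<Longrightarrow> adj A \<in> S" using qg by (auto simp: quantum_graph_def)
  have sub: "M.subspace (\<Union>k. subpow S k)"
    unfolding M.subspace_def
  proof (intro conjI ballI allI)
    show "0 \<in> (\<Union>k. subpow S k)" using M.subspace_0[OF subpow_subspace] by blast
    fix x y c assume x: "x \<in> (\<Union>k. subpow S k)" and y: "y \<in> (\<Union>k. subpow S k)"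
    then obtain a b where "x \<in> subpow S a" "y \<in> subpow S b" by auto
    then have "x \<in> subpow S (max a b)" "y \<in> subpow S (max a b)"
      using subpow_mono[OF one, of a "max a b"] subpow_mono[OF one, of b "max a b"] by auto
    then show "x + y \<in> (\<Union>k. subpow S k)" using M.subspace_add[OF subpow_subspace] by blast
    show "mscale c x \<in> (\<Union>k. subpow S k)" using x M.subspace_scale[OF subpow_subspace] by blast
  qed
  have m1: "mat 1 \<in> (\<Union>k. subpow S k)" using subpow_one[OF one] by blast
  have mu: "\<forall>X\<in>(\<Union>k. subpow S k). \<forall>Y\<in>(\<Union>k. subpow S k). X ** Y \<in> (\<Union>k. subpow S k)"
  proof (intro ballI)
    fix X Y assume "X \<in> (\<Union>k. subpow S k)" "Y \<in> (\<Union>k. subpow S k)"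
    then obtain a b where "X \<in> subpow S a" "Y \<in> subpow S b" by blast
    then have "X ** Y \<in> subpow S (a + b)" by (rule subpow_mult)
    then show "X ** Y \<in> (\<Union>k. subpow S k)" by blast
  qed
  have ad: "\<forall>X\<in>(\<Union>k. subpow S k). adj X \<in> (\<Union>k. subpow S k)"
  proof
    fix X assume "X \<in> (\<Union>k. subpow S k)"
    then obtain a where "X \<in> subpow S a" by blast
    then have "adj X \<in> subpow S a" using subpow_adj[of S X a] adjS by blast
    then show "adj X \<in> (\<Union>k. subpow S k)" by blast
  qed
  show ?thesis unfolding staralg_def using sub m1 mu ad by blast
qed




lemma dir1:
  fixes S :: "'n::finite cmat set"
  assumes "quantum_graph S" and "qconnected S"
  shows "(\<forall>(m::nat) (P :: nat \<Rightarrow> 'n cmat).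
       (\<forall>i\<in>{1..m}. nontrivial_projection (P i))
       \<longrightarrow> (\<forall>i\<in>{1..m}. \<forall>j\<in>{1..m}. i \<noteq> j \<longrightarrow> P i ** P j = 0)
       \<longrightarrow> (\<Sum>i\<in>{1..m}. P i) = mat 1
       \<longrightarrow> (\<Sum>(i, j)\<in>{(i, j). i \<in> {1..m} \<and> j \<in> {1..m} \<and> i \<noteq> j}.
              cdim (sandwich (P j) S (P i))) \<ge> 2 * (m - 1))"
proof -
  have one: "mat 1 \<in> S" and adjS: "\<And>A. A \<in> S \<Longrightarrow> adj A \<in> S"
    using assms by (auto simp: quantum_graph_def)
    then obtain N where N: "subpow S N = UNIV" by (use assms(2) in \<open>auto simp: qconnected_def\<close>)
    show "\<forall>(m::nat) (P :: nat \<Rightarrow> 'n cmat).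
       (\<forall>i\<in>{1..m}. nontrivial_projection (P i))
       \<longrightarrow> (\<forall>i\<in>{1..m}. \<forall>j\<in>{1..m}. i \<noteq> j \<longrightarrow> P i ** P j = 0)
       \<longrightarrow> (\<Sum>i\<in>{1..m}. P i) = mat 1
       \<longrightarrow> (\<Sum>(i, j)\<in>{(i, j). i \<in> {1..m} \<and> j \<in> {1..m} \<and> i \<noteq> j}.
              cdim (sandwich (P j) S (P i))) \<ge> 2 * (m - 1)"
    proof (intro allI impI)
      fix m :: nat and P :: "nat \<Rightarrow> 'n cmat"
      assume ntp: "\<forall>i\<in>{1..m}. nontrivial_projection (P i)"
        and disj: "\<forall>i\<in>{1..m}. \<forall>j\<in>{1..m}. i \<noteq> j \<longrightarrow> P i ** P j = 0"
        and sumI: "(\<Sum>i\<in>{1..m}. P i) = mat 1"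
      define V where "V = {1..m}"
      have finV: "finite V" by (simp add: V_def)
      have Vne: "V \<noteq> {}"
      proof
        assume "V = {}"
        then have "(\<Sum>i\<in>{1..m}. P i) = 0" by (simp add: V_def)
        then show False using sumI mat1_neq0[where 'n='n] by simp
      qed
      have adjP: "adj (P i) = P i" and PP: "P i ** P i = P i" and P0: "P i \<noteq> 0" if "i \<in> V" for i
        using ntp that by (auto simp: V_def nontrivial_projection_def is_projection_def)
      define E where "E i j \<longleftrightarrow> i \<in> V \<and> j \<in> V \<and> (\<exists>A\<in>S. P j ** A ** P i \<noteq> 0)" for i j
      have symE: "E j i" if Eij: "E i j" for i j
      proof -
        obtain A where A: "A \<in> S" "P j ** A ** P i \<noteq> 0" using Eij by (auto simp: E_def)
        have "adj (P j ** A ** P i) = P i ** adj A ** P j"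
          using Eij by (simp add: E_def adj_mult adjP matrix_mul_assoc)
        then have "P i ** adj A ** P j \<noteq> 0" using A(2) adj_eq_0 by metis
        then show ?thesis using Eij adjS[OF A(1)] by (auto simp: E_def)
      qed
      have connE: "\<exists>j\<in>J. \<exists>i\<in>V-J. E i j" if J: "J \<subseteq> V" "J \<noteq> {}" "J \<noteq> V" for J
      proof (rule ccontr)
        assume "\<not> (\<exists>j\<in>J. \<exists>i\<in>V-J. E i j)"
        then have z1: "P j ** A ** P i = 0" if "j \<in> J" "i \<in> V - J" "A \<in> S" for i j A
          using that J by (auto simp: E_def)
        have z2: "P i ** A ** P j = 0" if "j \<in> J" "i \<in> V - J" "A \<in> S" for i j A
        proof -
          have "P i ** A ** P j = adj (P j ** adj A ** P i)"
            using that J by (auto simp: adj_mult adjP matrix_mul_assoc)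
          then show ?thesis using z1[OF that(1,2) adjS[OF that(3)]] by simp
        qed
        define Q where "Q = (\<Sum>j\<in>J. P j)"
        define Q' where "Q' = (\<Sum>i\<in>V-J. P i)"
        have finJ: "finite J" using J(1) finV finite_subset by blast
        have QQ': "Q + Q' = mat 1"
          using sumI sum.subset_diff[OF J(1) finV, of P] by (simp add: Q_def Q'_def V_def add.commute)
        have s1: "Q ** A ** Q' = 0" if "A \<in> S" for A
          unfolding Q_def Q'_def
          by (simp add: sum_mult_right sum_mult_left finJ finV z1 that)
        have s2: "Q' ** A ** Q = 0" if "A \<in> S" for A
          unfolding Q_def Q'_def
          by (simp add: sum_mult_right sum_mult_left finJ finV z2 that)
        have comm: "Q ** A = A ** Q" if "A \<in> S" for A
        proof -
          have "Q ** A = Q ** A ** (Q + Q')" using QQ' by simp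
          also have "\<dots> = Q ** A ** Q" by (simp add: matrix_add_ldistrib s1 that)
          also have "\<dots> = (Q + Q') ** A ** Q" by (simp add: matrix_add_rdistrib' s2 that)
          also have "\<dots> = A ** Q" using QQ' by simp
          finally show ?thesis .
        qed
        have "Q ** U a b = U a b ** Q" for a b
          using subpow_comm[OF comm, where X="U a b" and k=N] N by auto
        then have Qc: "Q = mscale (Q$k$k) (mat 1)" for k by (rule central)
        obtain j0 where j0: "j0 \<in> J" using J(2) by auto
        obtain i0 where i0: "i0 \<in> V - J" using J(1) J(3) by auto
        have "Q ** P j0 = (\<Sum>j\<in>J. P j ** P j0)" by (simp add: Q_def sum_mult_right finJ)
        also have "\<dots> = (\<Sum>j\<in>{j0}. P j ** P j0)"
          using j0 J(1) disj by (intro sum.mono_neutral_right finJ) (auto simp: V_def)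
        also have "\<dots> = P j0" using PP j0 J(1) by auto
        finally have q1: "Q ** P j0 = P j0" .
        have q2: "Q ** P i0 = 0"
        proof -
          have "\<forall>x\<in>J. P x ** P i0 = 0"
          proof
            fix x assume "x \<in> J"
            then have "x \<in> {1..m}" "x \<noteq> i0" using J(1) i0 by (auto simp: V_def)
            then show "P x ** P i0 = 0" using disj i0 by (auto simp: V_def)
          qed
          then show ?thesis by (simp add: Q_def sum_mult_right finJ)
        qed
        define c where "c = Q$undefined$undefined"
        have Qc': "Q = mscale c (mat 1)" using Qc[of undefined] by (simp only: c_def)
        have "Q ** P i0 = mscale c (P i0)" by (subst Qc') (simp add: mscale_mult_left)
        then have "mscale c (P i0) = 0" using q2 by simp
        then have "c = 0" using P0 i0 mscale_eq0 by blast
        have "Q ** P j0 = mscale c (P j0)" by (subst Qc') (simp add: mscale_mult_left)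
        then have "P j0 = 0" using q1 \<open>c = 0\<close> by simp
        then show False using P0 j0 J(1) by auto
      qed
      define Pairs where "Pairs = {(i, j). i \<in> {1..m} \<and> j \<in> {1..m} \<and> i \<noteq> j}"
      define X where "X = {(i,j). i \<in> V \<and> j \<in> V \<and> i \<noteq> j \<and> E i j}"
      have finP: "finite Pairs"
        by (rule finite_subset[of _ "{1..m} \<times> {1..m}"]) (auto simp: Pairs_def)
      have XP: "X \<subseteq> Pairs" by (auto simp: X_def Pairs_def V_def)
      have "2 * (card V - 1) \<le> card X"
        unfolding X_def by (rule graph_count[OF finV Vne connE symE])
      also have "card X = (\<Sum>x\<in>X. 1)" by simp
      also have "\<dots> \<le> (\<Sum>(i,j)\<in>X. cdim (sandwich (P j) S (P i)))"
      proof (rule sum_mono)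
        fix x assume "x \<in> X"
        then obtain i j where x: "x = (i,j)" and "E i j" by (auto simp: X_def)
        then obtain A where "A \<in> S" "P j ** A ** P i \<noteq> 0" by (auto simp: E_def)
        then have "\<not> sandwich (P j) S (P i) \<subseteq> {0}" by (auto simp: sandwich_def)
        then have "cdim (sandwich (P j) S (P i)) \<noteq> 0" by (simp add: cdim_eq_0)
        then show "1 \<le> (case x of (i, j) \<Rightarrow> cdim (sandwich (P j) S (P i)))" by (simp add: x)
      qed
      also have "\<dots> \<le> (\<Sum>(i,j)\<in>Pairs. cdim (sandwich (P j) S (P i)))"
        by (rule sum_mono2[OF finP XP]) simp
      finally show "2 * (m - 1) \<le> (\<Sum>(i,j)\<in>{(i, j). i \<in> {1..m} \<and> j \<in> {1..m} \<and> i \<noteq> j}. cdim (sandwich (P j) S (P i)))"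
        by (simp add: Pairs_def V_def)
    qed
qed



lemma dir2:
  fixes S :: "'n::finite cmat set"
  assumes "quantum_graph S" and cond: "(\<forall>(m::nat) (P :: nat \<Rightarrow> 'n cmat).
       (\<forall>i\<in>{1..m}. nontrivial_projection (P i))
       \<longrightarrow> (\<forall>i\<in>{1..m}. \<forall>j\<in>{1..m}. i \<noteq> j \<longrightarrow> P i ** P j = 0)
       \<longrightarrow> (\<Sum>i\<in>{1..m}. P i) = mat 1
       \<longrightarrow> (\<Sum>(i, j)\<in>{(i, j). i \<in> {1..m} \<and> j \<in> {1..m} \<and> i \<noteq> j}.
              cdim (sandwich (P j) S (P i))) \<ge> 2 * (m - 1))"
  shows "qconnected S"
proof -
  have one: "mat 1 \<in> S" and adjS: "\<And>A. A \<in> S \<Longrightarrow> adj A \<in> S"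
    using assms by (auto simp: quantum_graph_def)

    define A where "A = (\<Union>k. subpow S k)"
    have A: "staralg A" unfolding A_def by (rule staralg_union[OF assms(1)])
    have SA: "S \<subseteq> A" using S_sub_subpow1[of S] by (auto simp: A_def)
    have "irr A"
      unfolding irr_def
    proof (intro allI impI)
      fix P :: "'n cmat" assume Pp: "is_projection P" and comm: "\<forall>X\<in>A. P ** X = X ** P"
      show "P = 0 \<or> P = mat 1"
      proof (rule ccontr)
        assume nt: "\<not> (P = 0 \<or> P = mat 1)"
        have adjP: "adj P = P" and PP: "P ** P = P" using Pp by (auto simp: is_projection_def)
        define P2 where "P2 = mat 1 - P"
        have P2P2: "P2 ** P2 = P2"
          by (simp add: P2_def matrix_diff_ldistrib matrix_diff_rdistrib PP)
        have adjP2: "adj P2 = P2" by (simp add: P2_def adj_diff adjP)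
        have P20: "P2 \<noteq> 0" using nt by (auto simp: P2_def)
        have P21: "P2 \<noteq> mat 1" using nt by (auto simp: P2_def)
        have PP2: "P ** P2 = 0" "P2 ** P = 0"
          by (simp_all add: P2_def matrix_diff_ldistrib matrix_diff_rdistrib PP)
        define PF where "PF i = (if i = (1::nat) then P else P2)" for i
        have ntp: "\<forall>i\<in>{1..2}. nontrivial_projection (PF i)"
          using nt P2P2 adjP2 P20 P21 PP adjP
          by (auto simp: PF_def nontrivial_projection_def is_projection_def)
        have dj: "\<forall>i\<in>{1..2}. \<forall>j\<in>{1..2}. i \<noteq> j \<longrightarrow> PF i ** PF j = 0"
          using PP2 by (auto simp: PF_def)
        have "{1..2::nat} = {1,2}" by auto
        then have sm: "(\<Sum>i\<in>{1..2::nat}. PF i) = mat 1" by (simp add: PF_def P2_def)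
        have "2 * (2 - 1) \<le> (\<Sum>(i, j)\<in>{(i, j). i \<in> {1..2::nat} \<and> j \<in> {1..2} \<and> i \<noteq> j}.
              cdim (sandwich (PF j) S (PF i)))"
          by (rule mp[OF mp[OF mp[OF spec[OF spec[OF cond, of 2], of PF] ntp] dj] sm])
        moreover have "{(i, j). i \<in> {1..2::nat} \<and> j \<in> {1..2} \<and> i \<noteq> j} = {(1,2),(2,1)}" by auto
        moreover have "sandwich P2 S P \<subseteq> {0}"
        proof
          fix Z assume "Z \<in> sandwich P2 S P"
          then obtain X where X: "X \<in> S" "Z = P2 ** X ** P" by (auto simp: sandwich_def)
          have "P ** X = X ** P" using comm SA X(1) by auto
          then have "P ** X ** P = X ** P" by (metis PP matrix_mul_assoc)
          then show "Z \<in> {0}" using X(2) by (simp add: P2_def matrix_diff_rdistrib)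
        qed
        moreover have "sandwich P S P2 \<subseteq> {0}"
        proof
          fix Z assume "Z \<in> sandwich P S P2"
          then obtain X where X: "X \<in> S" "Z = P ** X ** P2" by (auto simp: sandwich_def)
          have "P ** X = X ** P" using comm SA X(1) by auto
          then have "P ** X ** P = P ** X" by (metis PP matrix_mul_assoc)
          then show "Z \<in> {0}" using X(2) by (simp add: P2_def matrix_diff_ldistrib)
        qed
        ultimately show False using cdim_eq_0[of "sandwich P2 S P"] cdim_eq_0[of "sandwich P S P2"]
          by (simp add: PF_def)
      qed
    qed
    then have AU: "A = UNIV" by (rule burnside[OF A])
    have "\<forall>ab. \<exists>k. U (fst ab) (snd ab) \<in> subpow S k" using AU by (auto simp: A_def)
    then obtain f where f: "\<And>ab. U (fst ab) (snd ab) \<in> subpow S (f ab)" by metis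
    define K where "K = Max (range f)"
    have UK: "U a b \<in> subpow S K" for a b
    proof -
      have "f (a,b) \<le> K" unfolding K_def by (rule Max_ge) auto
      then show ?thesis using f[of "(a,b)"] subpow_mono[OF one] by auto
    qed
    have "Mx \<in> subpow S K" for Mx
    proof -
      have "(\<Sum>a\<in>UNIV. \<Sum>b\<in>UNIV. mscale (Mx$a$b) (U a b)) \<in> subpow S K"
        by (intro M.subspace_sum[OF subpow_subspace] M.subspace_scale[OF subpow_subspace] UK)
      then show ?thesis using mat_decomp[of Mx] by simp
    qed
    then show "qconnected S" unfolding qconnected_def by blast
qed

theorem theorem3p5:
  fixes S :: "'n::finite cmat set"
  assumes "quantum_graph S"
  shows "qconnected S \<longleftrightarrow>
    (\<forall>(m::nat) (P :: nat \<Rightarrow> 'n cmat).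
       (\<forall>i\<in>{1..m}. nontrivial_projection (P i))
       \<longrightarrow> (\<forall>i\<in>{1..m}. \<forall>j\<in>{1..m}. i \<noteq> j \<longrightarrow> P i ** P j = 0)
       \<longrightarrow> (\<Sum>i\<in>{1..m}. P i) = mat 1
       \<longrightarrow> (\<Sum>(i, j)\<in>{(i, j). i \<in> {1..m} \<and> j \<in> {1..m} \<and> i \<noteq> j}.
              cdim (sandwich (P j) S (P i))) \<ge> 2 * (m - 1))"
  using dir1[OF assms] dir2[OF assms] by blast

end
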